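(* There exists a countable subset $B\subseteq\mathbf{M}$ such that: (1) $\mathrm{gcl}(B)=\mathbf{M}$; (2) $B_0\leqslant\mathbf{M}$ for every finite $B_0\subseteq B$; (3) every permutation of $B$ extends to an automorphism of $\mathbf{M}$.
   Context: Fix $\mathfrak{m}\ge2$. Graphs, $\delta(A)=\mathfrak{m}|A|-|\mathcal{R}(A)|$ ($\mathcal{R}(A)$ the edge set), $A\leqslant B$ iff $\delta(A')\ge\delta(A)$ for all $A\subseteq A'\subseteq B$ (for infinite $N$: $A\leqslant B$ for all finite $B\subseteq N$ containing $A$). $\mathsf{K_0}$ = finite graphs all of whose subgraphs have $\delta\ge0$. $\mathbf{M}$ is the $(\mathsf{K_0},\leqslant)$-generic: unique countable graph that is a union of a chain of finite $\leqslant$-closed subsets, in which isomorphisms between finite $\leqslant$-closed subsets extend to automorphisms, and into which every member of $\mathsf{K_0}$ embeds $\leqslant$-closedly. $\mathrm{cl}(A)$ is the smallest finite $\leqslant$-closed subset of $\mathbf{M}$ containing finite $A$; $\mathrm{d}(A)=\delta(\mathrm{cl}(A))$; $\mathrm{d}(m/A)=\mathrm{d}(\{m\}\cup A)-\mathrm{d}(A)$; for any $X\subseteq\mathbf{M}$, $\mathrm{gcl}(X)=\{m\in\mathbf{M}:\mathrm{d}(m/A)=0$ for some finite $A\subseteq X\}$. *)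

theory Defs
  imports Main "HOL-Library.Countable_Set"
begin

definition graph :: "'a set \<Rightarrow> ('a \<Rightarrow> 'a \<Rightarrow> bool) \<Rightarrow> bool" where
  "graph V E \<longleftrightarrow> (\<forall>x y. E x y \<longrightarrow> E y x) \<and> (\<forall>x. \<not> E x x)"

definition edges :: "('a \<Rightarrow> 'a \<Rightarrow> bool) \<Rightarrow> 'a set \<Rightarrow> 'a set set" where
  "edges E A = {{x, y} | x y. x \<in> A \<and> y \<in> A \<and> E x y}"

definition delta :: "nat \<Rightarrow> ('a \<Rightarrow> 'a \<Rightarrow> bool) \<Rightarrow> 'a set \<Rightarrow> int" where
  "delta m E A = int m * int (card A) - int (card (edges E A))"

text \<open>A \<le> N (strong / closed substructure); for finite N this is the usual
  definition, for infinite N it is "A \<le> B for all finite B with A \<subseteq> B \<subseteq> N".\<close>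
definition strong :: "nat \<Rightarrow> ('a \<Rightarrow> 'a \<Rightarrow> bool) \<Rightarrow> 'a set \<Rightarrow> 'a set \<Rightarrow> bool" where
  "strong m E A N \<longleftrightarrow> A \<subseteq> N \<and>
     (\<forall>B. finite B \<and> A \<subseteq> B \<and> B \<subseteq> N \<longrightarrow>
        (\<forall>A'. A \<subseteq> A' \<and> A' \<subseteq> B \<longrightarrow> delta m E A' \<ge> delta m E A))"

text \<open>Members of K_0, represented (up to isomorphism) as finite graphs on nat.\<close>
definition inK0 :: "nat \<Rightarrow> nat set \<Rightarrow> (nat \<Rightarrow> nat \<Rightarrow> bool) \<Rightarrow> bool" where
  "inK0 m W F \<longleftrightarrow> finite W \<and> graph W F \<and> (\<forall>A \<subseteq> W. delta m F A \<ge> 0)"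

definition automorphism :: "'a set \<Rightarrow> ('a \<Rightarrow> 'a \<Rightarrow> bool) \<Rightarrow> ('a \<Rightarrow> 'a) \<Rightarrow> bool" where
  "automorphism V E g \<longleftrightarrow> bij_betw g V V \<and> (\<forall>x\<in>V. \<forall>y\<in>V. E (g x) (g y) \<longleftrightarrow> E x y)"

definition generic :: "nat \<Rightarrow> 'a set \<Rightarrow> ('a \<Rightarrow> 'a \<Rightarrow> bool) \<Rightarrow> bool" where
  "generic m V E \<longleftrightarrow>
     graph V E \<and> countable V \<and>
     (\<forall>A \<subseteq> V. finite A \<longrightarrow> delta m E A \<ge> 0) \<and>
     (\<exists>C :: nat \<Rightarrow> 'a set. (\<forall>n. finite (C n) \<and> strong m E (C n) V \<and> C n \<subseteq> C (Suc n))
          \<and> (\<Union>n. C n) = V) \<and>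
     (\<forall>A B f. finite A \<and> finite B \<and> strong m E A V \<and> strong m E B V \<and> bij_betw f A B \<and>
          (\<forall>x\<in>A. \<forall>y\<in>A. E (f x) (f y) \<longleftrightarrow> E x y) \<longrightarrow>
          (\<exists>g. automorphism V E g \<and> (\<forall>x\<in>A. g x = f x))) \<and>
     (\<forall>W F. inK0 m W F \<longrightarrow>
          (\<exists>h. inj_on h W \<and> h ` W \<subseteq> V \<and> (\<forall>x\<in>W. \<forall>y\<in>W. E (h x) (h y) \<longleftrightarrow> F x y)
               \<and> strong m E (h ` W) V))"

definition cl :: "nat \<Rightarrow> 'a set \<Rightarrow> ('a \<Rightarrow> 'a \<Rightarrow> bool) \<Rightarrow> 'a set \<Rightarrow> 'a set" where
  "cl m V E A = (THE C. finite C \<and> A \<subseteq> C \<and> strong m E C V \<and>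
        (\<forall>C'. finite C' \<and> A \<subseteq> C' \<and> strong m E C' V \<longrightarrow> C \<subseteq> C'))"

definition dim :: "nat \<Rightarrow> 'a set \<Rightarrow> ('a \<Rightarrow> 'a \<Rightarrow> bool) \<Rightarrow> 'a set \<Rightarrow> int" where
  "dim m V E A = delta m E (cl m V E A)"

definition reldim :: "nat \<Rightarrow> 'a set \<Rightarrow> ('a \<Rightarrow> 'a \<Rightarrow> bool) \<Rightarrow> 'a \<Rightarrow> 'a set \<Rightarrow> int" where
  "reldim m V E x A = dim m V E (insert x A) - dim m V E A"

definition gcl :: "nat \<Rightarrow> 'a set \<Rightarrow> ('a \<Rightarrow> 'a \<Rightarrow> bool) \<Rightarrow> 'a set \<Rightarrow> 'a set" where
  "gcl m V E X = {x \<in> V. \<exists>A. finite A \<and> A \<subseteq> X \<and> reldim m V E x A = 0}"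

end

theory Submission
  imports Defs
begin

lemma edges_subset_Pow: "edges E A \<subseteq> Pow A"
  unfolding edges_def by auto

lemma finite_edges: "finite A \<Longrightarrow> finite (edges E A)"
  by (rule finite_subset[OF edges_subset_Pow]) simp

lemma edges_mono: "A \<subseteq> B \<Longrightarrow> edges E A \<subseteq> edges E B"
  unfolding edges_def by blast

lemma edges_Int: "edges E (A \<inter> B) = edges E A \<inter> edges E B"
proof
  show "edges E (A \<inter> B) \<subseteq> edges E A \<inter> edges E B" using edges_mono[of "A \<inter> B" A E] edges_mono[of "A \<inter> B" B E] by blast
  show "edges E A \<inter> edges E B \<subseteq> edges E (A \<inter> B)"
  proof
    fix e assume "e \<in> edges E A \<inter> edges E B"
    then obtain x y where e: "e = {x,y}" "x \<in> A" "y \<in> A" "E x y" unfolding edges_def by blast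
    from \<open>e \<in> edges E A \<inter> edges E B\<close> have "e \<subseteq> B" using edges_subset_Pow by blast
    with e show "e \<in> edges E (A \<inter> B)" unfolding edges_def by blast
  qed
qed

lemma edges_Un: "edges E A \<union> edges E B \<subseteq> edges E (A \<union> B)"
  using edges_mono[of A "A \<union> B" E] edges_mono[of B "A \<union> B" E] by blast

lemma delta_submod:
  assumes "finite A" "finite B"
  shows "delta m E (A \<union> B) + delta m E (A \<inter> B) \<le> delta m E A + delta m E B"
proof -
  have c: "card (A \<union> B) + card (A \<inter> B) = card A + card B" using card_Un_Int[OF assms] by simp
  have fa: "finite (edges E A)" "finite (edges E B)" using assms finite_edges by auto
  have "card (edges E A \<union> edges E B) \<le> card (edges E (A \<union> B))"
    using card_mono[OF finite_edges[of "A \<union> B" E] edges_Un[of E A B]] assms by simp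
  moreover have "card (edges E A \<union> edges E B) + card (edges E A \<inter> edges E B) = card (edges E A) + card (edges E B)"
    using card_Un_Int[OF fa] by simp
  ultimately have "card (edges E A) + card (edges E B) \<le> card (edges E (A \<union> B)) + card (edges E (A \<inter> B))"
    by (simp add: edges_Int)
  then have e: "int (card (edges E A)) + int (card (edges E B)) \<le> int (card (edges E (A \<union> B))) + int (card (edges E (A \<inter> B)))"
    by linarith
  from c have "int (card (A \<union> B)) + int (card (A \<inter> B)) = int (card A) + int (card B)"
    by (metis of_nat_add)
  then have "int m * int (card (A \<union> B)) + int m * int (card (A \<inter> B)) = int m * int (card A) + int m * int (card B)"
    by (metis distrib_left)
  then show ?thesis unfolding delta_def using e by linarith
qed

lemma delta_le: "delta m E A \<le> int m * int (card A)"
  unfolding delta_def by simp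

lemma edges_insert:
  assumes sym: "\<forall>x y. E x y \<longrightarrow> E y x" and irr: "\<forall>x. \<not> E x x" and "x \<notin> A"
  shows "edges E (insert x A) = edges E A \<union> (\<lambda>a. {x,a}) ` {a\<in>A. E x a}"
proof -
  have "\<And>y z. y \<in> insert x A \<Longrightarrow> z \<in> insert x A \<Longrightarrow> E y z \<Longrightarrow>
     {y,z} \<in> edges E A \<or> {y,z} \<in> (\<lambda>a. {x,a}) ` {a\<in>A. E x a}"
  proof -
    fix y z assume "y \<in> insert x A" "z \<in> insert x A" "E y z"
    then consider "y = x" "z \<in> A" | "z = x" "y \<in> A" | "y \<in> A" "z \<in> A" using irr by auto
    then show "{y,z} \<in> edges E A \<or> {y,z} \<in> (\<lambda>a. {x,a}) ` {a\<in>A. E x a}"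
    proof cases
      case 1 then show ?thesis using \<open>E y z\<close> by auto
    next
      case 2
      then have "{y,z} = {x,y}" "E x y" using \<open>E y z\<close> sym by auto
      then show ?thesis using 2 by blast
    next
      case 3 then show ?thesis using \<open>E y z\<close> unfolding edges_def by blast
    qed
  qed
  note H = this
  show ?thesis
  proof
    show "edges E (insert x A) \<subseteq> edges E A \<union> (\<lambda>a. {x,a}) ` {a\<in>A. E x a}"
    proof
      fix e assume "e \<in> edges E (insert x A)"
      then obtain y z where "e = {y,z}" "y \<in> insert x A" "z \<in> insert x A" "E y z"
        unfolding edges_def by blast
      with H show "e \<in> edges E A \<union> (\<lambda>a. {x,a}) ` {a\<in>A. E x a}" by blast
    qed
    show "edges E A \<union> (\<lambda>a. {x,a}) ` {a\<in>A. E x a} \<subseteq> edges E (insert x A)"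
    proof -
      have "(\<lambda>a. {x,a}) ` {a\<in>A. E x a} \<subseteq> edges E (insert x A)" unfolding edges_def by auto
      then show ?thesis using edges_mono[of A "insert x A" E] by blast
    qed
  qed
qed

lemma delta_insert:
  assumes "graph V E" "finite A" "x \<notin> A"
  shows "delta m E (insert x A) = delta m E A + int m - int (card {a\<in>A. E x a})"
proof -
  have sym: "\<forall>x y. E x y \<longrightarrow> E y x" and irr: "\<forall>x. \<not> E x x" using assms(1) unfolding graph_def by auto
  have disj: "edges E A \<inter> (\<lambda>a. {x,a}) ` {a\<in>A. E x a} = {}"
    using edges_subset_Pow assms(3) by blast
  have inj: "inj_on (\<lambda>a. {x,a}) {a\<in>A. E x a}"
    using assms(3) unfolding inj_on_def by (metis doubleton_eq_iff mem_Collect_eq)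
  have "card (edges E (insert x A)) = card (edges E A) + card {a\<in>A. E x a}"
  proof -
    have f: "finite ((\<lambda>a. {x,a}) ` {a\<in>A. E x a})" using assms(2) by simp
    have "card (edges E A \<union> (\<lambda>a. {x,a}) ` {a\<in>A. E x a}) = card (edges E A) + card {a\<in>A. E x a}"
      using card_Un_disjoint[OF finite_edges[OF assms(2)] f disj] card_image[OF inj] by simp
    then show ?thesis using edges_insert[OF sym irr assms(3)] by simp
  qed
  moreover have "card (insert x A) = Suc (card A)" using assms by simp
  ultimately show ?thesis unfolding delta_def by (simp add: algebra_simps)
qed

lemma delta_empty[simp]: "delta m E {} = 0"
  unfolding delta_def edges_def by simp

lemma delta_image:
  assumes "inj_on h A" "\<forall>x\<in>A. \<forall>y\<in>A. E2 (h x) (h y) \<longleftrightarrow> E1 x y"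
  shows "delta m E2 (h ` A) = delta m E1 A"
proof -
  have e: "edges E2 (h ` A) = (\<lambda>e. h ` e) ` edges E1 A"
  proof
    show "edges E2 (h ` A) \<subseteq> (\<lambda>e. h ` e) ` edges E1 A"
    proof
      fix e assume "e \<in> edges E2 (h ` A)"
      then obtain x y where "e = {h x, h y}" "x \<in> A" "y \<in> A" "E2 (h x) (h y)"
        unfolding edges_def by blast
      then have "{x,y} \<in> edges E1 A" "e = h ` {x,y}" using assms(2) unfolding edges_def by auto
      then show "e \<in> (\<lambda>e. h ` e) ` edges E1 A" by blast
    qed
    show "(\<lambda>e. h ` e) ` edges E1 A \<subseteq> edges E2 (h ` A)"
    proof
      fix e assume "e \<in> (\<lambda>e. h ` e) ` edges E1 A"
      then obtain x y where "e = h ` {x, y}" "x \<in> A" "y \<in> A" "E1 x y"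
        unfolding edges_def by blast
      then show "e \<in> edges E2 (h ` A)" using assms(2) unfolding edges_def by auto
    qed
  qed
  have "inj_on (\<lambda>e. h ` e) (edges E1 A)"
    using inj_on_image_Pow[OF assms(1)] edges_subset_Pow by (meson inj_on_subset)
  then have "card (edges E2 (h ` A)) = card (edges E1 A)" unfolding e by (rule card_image)
  then show ?thesis unfolding delta_def using card_image[OF assms(1)] by simp
qed



locale gen =
  fixes m :: nat and V :: "'a set" and E :: "'a \<Rightarrow> 'a \<Rightarrow> bool"
  assumes m2: "m \<ge> 2" and gen: "generic m V E"
begin

abbreviation "\<delta> \<equiv> delta m E"

lemmas gparts = gen[unfolded generic_def]
lemma gr: "graph V E" using gparts by (rule conjunct1)
lemma symE: "E x y \<Longrightarrow> E y x" using gr unfolding graph_def by blast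
lemma irrE: "\<not> E x x" using gr unfolding graph_def by blast
lemma ctbl: "countable V" using gparts[THEN conjunct2] by (rule conjunct1)
lemma nonneg: "A \<subseteq> V \<Longrightarrow> finite A \<Longrightarrow> \<delta> A \<ge> 0"
  using gparts[THEN conjunct2, THEN conjunct2, THEN conjunct1] by blast
lemma chain: obtains C where "\<forall>n. finite (C n) \<and> strong m E (C n) V \<and> C n \<subseteq> C (Suc n)" "(\<Union>n. C n) = V"
  using gparts[THEN conjunct2, THEN conjunct2, THEN conjunct2, THEN conjunct1] by blast
lemma homog: "finite A \<Longrightarrow> finite B \<Longrightarrow> strong m E A V \<Longrightarrow> strong m E B V \<Longrightarrow> bij_betw f A B \<Longrightarrow>
          (\<forall>x\<in>A. \<forall>y\<in>A. E (f x) (f y) \<longleftrightarrow> E x y) \<Longrightarrow>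
          (\<exists>g. automorphism V E g \<and> (\<forall>x\<in>A. g x = f x))"
  using gparts[THEN conjunct2, THEN conjunct2, THEN conjunct2, THEN conjunct2, THEN conjunct1] by blast
lemma univ: "inK0 m W F \<Longrightarrow>
          (\<exists>h. inj_on h W \<and> h ` W \<subseteq> V \<and> (\<forall>x\<in>W. \<forall>y\<in>W. E (h x) (h y) \<longleftrightarrow> F x y)
               \<and> strong m E (h ` W) V)"
  using gparts[THEN conjunct2, THEN conjunct2, THEN conjunct2, THEN conjunct2, THEN conjunct2] by blast

definition st where "st A \<longleftrightarrow> A \<subseteq> V \<and> (\<forall>Y. finite Y \<and> A \<subseteq> Y \<and> Y \<subseteq> V \<longrightarrow> \<delta> A \<le> \<delta> Y)"

lemma strong_st: "strong m E A V \<longleftrightarrow> st A"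
proof
  assume "strong m E A V" then show "st A" unfolding strong_def st_def by blast
next
  assume a: "st A"
  show "strong m E A V" unfolding strong_def
  proof (intro conjI allI impI)
    show "A \<subseteq> V" using a unfolding st_def by blast
    fix B A' assume "finite B \<and> A \<subseteq> B \<and> B \<subseteq> V" "A \<subseteq> A' \<and> A' \<subseteq> B"
    then have "finite A'" "A \<subseteq> A'" "A' \<subseteq> V" using finite_subset by blast+
    then show "\<delta> A \<le> \<delta> A'" using a unfolding st_def by blast
  qed
qed

lemma st_le: "st A \<Longrightarrow> finite Y \<Longrightarrow> A \<subseteq> Y \<Longrightarrow> Y \<subseteq> V \<Longrightarrow> \<delta> A \<le> \<delta> Y"
  unfolding st_def by blast

lemma st_Int_le:
  assumes "finite D" "st D" "finite Y" "Y \<subseteq> V"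
  shows "\<delta> (Y \<inter> D) \<le> \<delta> Y"
proof -
  have "\<delta> (Y \<union> D) + \<delta> (Y \<inter> D) \<le> \<delta> Y + \<delta> D" using delta_submod assms by blast
  moreover have "D \<subseteq> V" using assms(2) unfolding st_def by blast
  then have "\<delta> D \<le> \<delta> (Y \<union> D)" using st_le[OF assms(2)] assms by auto
  ultimately show ?thesis by linarith
qed

lemma st_trans:
  assumes "finite D" "st D" "A \<subseteq> D" "\<forall>A'. A \<subseteq> A' \<and> A' \<subseteq> D \<longrightarrow> \<delta> A \<le> \<delta> A'"
  shows "st A"
  unfolding st_def
proof (intro conjI allI impI)
  show "A \<subseteq> V" using assms(2,3) unfolding st_def by blast
  fix Y assume Y: "finite Y \<and> A \<subseteq> Y \<and> Y \<subseteq> V"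
  then have "\<delta> (Y \<inter> D) \<le> \<delta> Y" using st_Int_le[OF assms(1,2)] by blast
  moreover have "A \<subseteq> Y \<inter> D" "Y \<inter> D \<subseteq> D" using assms(3) Y by auto
  then have "\<delta> A \<le> \<delta> (Y \<inter> D)" using assms(4) by blast
  ultimately show "\<delta> A \<le> \<delta> Y" by linarith
qed

lemma st_Int:
  assumes "finite C1" "finite C2" "st C1" "st C2"
  shows "st (C1 \<inter> C2)"
  unfolding st_def
proof (intro conjI allI impI)
  show "C1 \<inter> C2 \<subseteq> V" using assms(3) unfolding st_def by blast
  fix Y assume Y: "finite Y \<and> C1 \<inter> C2 \<subseteq> Y \<and> Y \<subseteq> V"
  then have 1: "\<delta> (Y \<inter> C1) \<le> \<delta> Y" using st_Int_le[OF assms(1,3)] by blast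
  have 2: "\<delta> ((Y \<inter> C1) \<inter> C2) \<le> \<delta> (Y \<inter> C1)" using st_Int_le[OF assms(2,4)] Y by auto
  have "(Y \<inter> C1) \<inter> C2 = C1 \<inter> C2" using Y by blast
  with 1 2 show "\<delta> (C1 \<inter> C2) \<le> \<delta> Y" by (metis order_trans)
qed

lemma delta_insert': "finite A \<Longrightarrow> x \<notin> A \<Longrightarrow> \<delta> (insert x A) = \<delta> A + int m - int (card {a\<in>A. E x a})"
  using delta_insert[OF gr] by blast

lemma delta_insert_le: "finite A \<Longrightarrow> \<delta> (insert x A) \<le> \<delta> A + int m"
  by (cases "x \<in> A") (auto simp: insert_absorb delta_insert')

lemma delta_add_le:
  assumes "finite Z" "finite A"
  shows "\<delta> (A \<union> Z) \<le> \<delta> A + int m * int (card (Z - A))"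
  using assms(1)
proof (induction Z rule: finite_induct)
  case empty then show ?case by simp
next
  case (insert z Z)
  show ?case
  proof (cases "z \<in> A")
    case True
    then have "A \<union> insert z Z = A \<union> Z" "insert z Z - A = Z - A" by auto
    then show ?thesis using insert by simp
  next
    case False
    then have c: "card (insert z Z - A) = Suc (card (Z - A))"
      using insert by (simp add: insert_Diff_if)
    have "\<delta> (A \<union> insert z Z) = \<delta> (insert z (A \<union> Z))" by simp
    also have "\<dots> \<le> \<delta> (A \<union> Z) + int m" using delta_insert_le insert assms by simp
    finally show ?thesis using insert.IH c by (simp add: algebra_simps)
  qed
qed

definition free where "free X \<longleftrightarrow> X \<subseteq> V \<and> (\<forall>Y. finite Y \<and> X \<subseteq> Y \<and> Y \<subseteq> V \<longrightarrow> int m * int (card X) \<le> \<delta> Y)"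

lemma free_subset:
  assumes "finite X" "free X" "X0 \<subseteq> X"
  shows "free X0"
  unfolding free_def
proof (intro conjI allI impI)
  show "X0 \<subseteq> V" using assms(2,3) unfolding free_def by blast
  fix Y assume Y: "finite Y \<and> X0 \<subseteq> Y \<and> Y \<subseteq> V"
  have 1: "\<delta> (Y \<union> X) \<le> \<delta> Y + int m * int (card (X - Y))" using delta_add_le assms Y by blast
  have 2: "int m * int (card X) \<le> \<delta> (Y \<union> X)" using assms Y unfolding free_def by auto
  have "card X = card (X \<inter> Y) + card (X - Y)" using card_Int_Diff[OF assms(1)] by blast
  moreover have "card X0 \<le> card (X \<inter> Y)" using assms Y by (intro card_mono) auto
  ultimately have "int (card X0) \<le> int (card X) - int (card (X - Y))" by linarith
  then have "int m * int (card X0) \<le> int m * (int (card X) - int (card (X - Y)))"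
    by (intro mult_left_mono) auto
  then have "int m * int (card X0) \<le> int m * int (card X) - int m * int (card (X - Y))"
    by (simp add: right_diff_distrib)
  with 1 2 show "int m * int (card X0) \<le> \<delta> Y" by linarith
qed

lemma aut_delta:
  assumes "automorphism V E g" "Y \<subseteq> V"
  shows "\<delta> (g ` Y) = \<delta> Y"
  using assms unfolding automorphism_def
  by (intro delta_image) (auto intro: inj_on_subset bij_betw_imp_inj_on)

lemma aut_st:
  assumes "automorphism V E g" "st Y"
  shows "st (g ` Y)"
  unfolding st_def
proof (intro conjI allI impI)
  have bij: "bij_betw g V V" using assms unfolding automorphism_def by blast
  have YV: "Y \<subseteq> V" using assms(2) unfolding st_def by blast
  show "g ` Y \<subseteq> V" using bij YV bij_betw_imp_surj_on by blast
  fix Z assume Z: "finite Z \<and> g ` Y \<subseteq> Z \<and> Z \<subseteq> V"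
  define Z' where "Z' = inv_into V g ` Z"
  have gZ': "g ` Z' = Z" unfolding Z'_def using Z bij
    by (intro image_inv_into_cancel[of g V V]) (auto simp: bij_betw_def)
  have Z'V: "Z' \<subseteq> V" unfolding Z'_def using Z bij
    by (auto simp: bij_betw_def intro!: inv_into_into)
  have "Y \<subseteq> Z'"
  proof
    fix y assume "y \<in> Y"
    then have "g y \<in> Z" using Z by blast
    moreover have "inv_into V g (g y) = y" using bij \<open>y \<in> Y\<close> YV by (auto simp: bij_betw_def inv_into_f_f)
    ultimately show "y \<in> Z'" unfolding Z'_def by force
  qed
  moreover have "finite Z'" unfolding Z'_def using Z by simp
  ultimately have "\<delta> Y \<le> \<delta> Z'" using st_le[OF assms(2) _ _ Z'V] by blast
  moreover have "\<delta> (g ` Y) = \<delta> Y" by (rule aut_delta[OF assms(1) YV])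
  moreover have "\<delta> (g ` Z') = \<delta> Z'" by (rule aut_delta[OF assms(1) Z'V])
  ultimately show "\<delta> (g ` Y) \<le> \<delta> Z" using gZ' by simp
qed

end


lemma delta_insert_ge:
  assumes "graph V F" "finite X" "x \<notin> X" "card {a\<in>X. F x a} \<le> c"
  shows "delta m F (insert x X) \<ge> delta m F X + int m - int c"
  using delta_insert[OF assms(1-3), of m] assms(4) by simp

context gen begin

lemma ext:
  assumes S: "finite S" "st S" and W: "inK0 m W F" and e: "inj_on e S" "e ` S \<subseteq> W"
    "\<forall>x\<in>S. \<forall>y\<in>S. F (e x) (e y) \<longleftrightarrow> E x y"
    and Sl: "\<forall>A'. e ` S \<subseteq> A' \<and> A' \<subseteq> W \<longrightarrow> delta m F (e ` S) \<le> delta m F A'"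
  shows "\<exists>k. inj_on k W \<and> k ` W \<subseteq> V \<and> (\<forall>x\<in>W. \<forall>y\<in>W. E (k x) (k y) \<longleftrightarrow> F x y) \<and> st (k ` W) \<and> (\<forall>s\<in>S. k (e s) = s)"
proof -
  obtain h where h: "inj_on h W" "h ` W \<subseteq> V" "\<forall>x\<in>W. \<forall>y\<in>W. E (h x) (h y) \<longleftrightarrow> F x y" "strong m E (h ` W) V"
    using univ[OF W] by blast
  have sthW: "st (h ` W)" using h(4) strong_st by blast
  have fW: "finite W" using W unfolding inK0_def by blast
  define A where "A = h ` e ` S"
  have dA: "\<And>Z. Z \<subseteq> W \<Longrightarrow> \<delta> (h ` Z) = delta m F Z"
  proof -
    fix Z assume "Z \<subseteq> W"
    then show "\<delta> (h ` Z) = delta m F Z"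
      using h(3) inj_on_subset[OF h(1)] by (intro delta_image) auto
  qed
  have stA: "st A"
  proof (rule st_trans[of "h ` W"])
    show "finite (h ` W)" using fW by simp
    show "st (h ` W)" by (rule sthW)
    show "A \<subseteq> h ` W" unfolding A_def using e(2) by blast
    show "\<forall>A'. A \<subseteq> A' \<and> A' \<subseteq> h ` W \<longrightarrow> \<delta> A \<le> \<delta> A'"
    proof (intro allI impI)
      fix A' assume a: "A \<subseteq> A' \<and> A' \<subseteq> h ` W"
      define Z where "Z = W \<inter> h -` A'"
      have hZ: "h ` Z = A'" using a unfolding Z_def by blast
      have eZ: "e ` S \<subseteq> Z" using a e(2) unfolding A_def Z_def by blast
      have ZW: "Z \<subseteq> W" unfolding Z_def by blast
      have "delta m F (e ` S) \<le> delta m F Z" using Sl eZ ZW by blast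
      moreover have "\<delta> A = delta m F (e ` S)" unfolding A_def using dA e(2) by blast
      moreover have "\<delta> A' = delta m F Z" using dA[OF ZW] hZ by simp
      ultimately show "\<delta> A \<le> \<delta> A'" by simp
    qed
  qed
  define f where "f = (\<lambda>a. inv_into S e (inv_into W h a))"
  have fa: "\<And>s. s \<in> S \<Longrightarrow> f (h (e s)) = s"
  proof -
    fix s assume s: "s \<in> S"
    then have "e s \<in> W" using e(2) by blast
    then have "inv_into W h (h (e s)) = e s" using h(1) by (simp add: inv_into_f_f)
    then show "f (h (e s)) = s" unfolding f_def using e(1) s by (simp add: inv_into_f_f)
  qed
  have bij: "bij_betw f A S"
  proof (rule bij_betw_byWitness[where f'="\<lambda>s. h (e s)"])
    show "\<forall>a\<in>A. h (e (f a)) = a" unfolding A_def using fa by auto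
    show "\<forall>a'\<in>S. f (h (e a')) = a'" using fa by blast
    show "f ` A \<subseteq> S" unfolding A_def using fa by auto
    show "(\<lambda>s. h (e s)) ` S \<subseteq> A" unfolding A_def by blast
  qed
  have edA: "\<forall>x\<in>A. \<forall>y\<in>A. E (f x) (f y) \<longleftrightarrow> E x y"
  proof (intro ballI)
    fix x y assume "x \<in> A" "y \<in> A"
    then obtain s t where st: "s \<in> S" "t \<in> S" "x = h (e s)" "y = h (e t)" unfolding A_def by blast
    then have "e s \<in> W" "e t \<in> W" using e(2) by auto
    then show "E (f x) (f y) \<longleftrightarrow> E x y" using st fa e(3) h(3) by simp
  qed
  have fA: "finite A" unfolding A_def using S by simp
  obtain g where g: "automorphism V E g" "\<forall>x\<in>A. g x = f x"
    using homog[OF fA S(1) _ _ bij edA] stA S(2) strong_st by blast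
  have gbij: "bij_betw g V V" and gE: "\<forall>x\<in>V. \<forall>y\<in>V. E (g x) (g y) \<longleftrightarrow> E x y"
    using g(1) unfolding automorphism_def by blast+
  define k where "k = g \<circ> h"
  have "inj_on k W" unfolding k_def
    using h(1,2) gbij by (intro comp_inj_on) (auto intro: inj_on_subset bij_betw_imp_inj_on)
  moreover have "k ` W \<subseteq> V" unfolding k_def using h(2) gbij bij_betw_imp_surj_on by fastforce
  moreover have "\<forall>x\<in>W. \<forall>y\<in>W. E (k x) (k y) \<longleftrightarrow> F x y"
  proof (intro ballI)
    fix x y assume "x \<in> W" "y \<in> W"
    then have "h x \<in> V" "h y \<in> V" using h(2) by auto
    then show "E (k x) (k y) \<longleftrightarrow> F x y" unfolding k_def using gE h(3) \<open>x \<in> W\<close> \<open>y \<in> W\<close> by simp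
  qed
  moreover have "st (k ` W)" unfolding k_def image_comp[symmetric] using aut_st[OF g(1) sthW] .
  moreover have "\<forall>s\<in>S. k (e s) = s" unfolding k_def using g(2) fa unfolding A_def by auto
  ultimately show ?thesis by blast
qed

end


context gen begin

lemma gadget:
  assumes S: "finite S" "st S" and N: "N \<subseteq> S" "card N = m"
  shows "\<exists>b w. b \<in> V - S \<and> w \<in> V - S \<and> b \<noteq> w \<and> E b w \<and> (\<forall>s\<in>S. \<not> E b s)
     \<and> (\<forall>s\<in>S. E w s \<longleftrightarrow> s \<in> N) \<and> st (insert b (insert w S))"
proof -
  define enc where "enc = to_nat_on V"
  have inj: "inj_on enc V" unfolding enc_def using ctbl by (rule inj_on_to_nat_on)
  define dec where "dec = inv_into V enc"
  have SV: "S \<subseteq> V" using S(2) unfolding st_def by blast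
  have NV: "N \<subseteq> V" using N SV by blast
  define S' where "S' = enc ` S"
  define N' where "N' = enc ` N"
  have fS': "finite S'" unfolding S'_def using S by simp
  define p where "p = Suc (Max (insert 0 S'))"
  define q where "q = Suc p"
  have pS: "p \<notin> S'"
  proof
    assume "p \<in> S'"
    then have "p \<le> Max (insert 0 S')" using fS' by simp
    then show False unfolding p_def by simp
  qed
  have qS: "q \<notin> S'"
  proof
    assume "q \<in> S'"
    then have "q \<le> Max (insert 0 S')" using fS' by simp
    then show False unfolding q_def p_def by simp
  qed
  have pq: "p \<noteq> q" unfolding q_def by simp
  have N'S': "N' \<subseteq> S'" unfolding N'_def S'_def using N by blast
  have cN': "card N' = m" unfolding N'_def using N inj NV by (simp add: card_image inj_on_subset)
  have decenc: "\<And>x. x \<in> V \<Longrightarrow> dec (enc x) = x" unfolding dec_def using inj by (simp add: inv_into_f_f)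
  define F where "F = (\<lambda>x y. (x \<in> S' \<and> y \<in> S' \<and> E (dec x) (dec y)) \<or> (x = p \<and> y = q) \<or> (x = q \<and> y = p)
       \<or> (x = q \<and> y \<in> N') \<or> (y = q \<and> x \<in> N'))"
  define W where "W = insert p (insert q S')"
  have fW: "finite W" unfolding W_def using fS' by simp
  have grF: "graph W F" unfolding graph_def
  proof (intro conjI allI impI)
    fix x y assume "F x y" then show "F y x" unfolding F_def using symE by blast
  next
    fix x show "\<not> F x x" unfolding F_def using irrE pq qS N'S' by blast
  qed
  have edS: "\<forall>x\<in>S. \<forall>y\<in>S. F (enc x) (enc y) \<longleftrightarrow> E x y"
  proof (intro ballI)
    fix x y assume "x \<in> S" "y \<in> S"
    then have "enc x \<in> S'" "enc y \<in> S'" "dec (enc x) = x" "dec (enc y) = y" using decenc SV unfolding S'_def by auto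
    then show "F (enc x) (enc y) \<longleftrightarrow> E x y" unfolding F_def using pS qS by auto
  qed
  have dS': "\<And>A0. A0 \<subseteq> S' \<Longrightarrow> delta m F A0 = \<delta> (dec ` A0) \<and> dec ` A0 \<subseteq> V"
  proof -
    fix A0 assume A0: "A0 \<subseteq> S'"
    have sub: "A0 \<subseteq> enc ` V" using A0 SV unfolding S'_def by blast
    have "inj_on dec A0" unfolding dec_def using sub by (rule inj_on_inv_into)
    moreover have "\<forall>x\<in>A0. \<forall>y\<in>A0. E (dec x) (dec y) \<longleftrightarrow> F x y" unfolding F_def using A0 pS qS by auto
    ultimately have "\<delta> (dec ` A0) = delta m F A0" by (rule delta_image)
    moreover have "dec ` A0 \<subseteq> V" unfolding dec_def using sub by (auto intro: inv_into_into)
    ultimately show "delta m F A0 = \<delta> (dec ` A0) \<and> dec ` A0 \<subseteq> V" by simp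
  qed
  have low: "\<And>A. A \<subseteq> W \<Longrightarrow> delta m F (A \<inter> S') \<le> delta m F A"
  proof -
    fix A assume A: "A \<subseteq> W"
    define A0 where "A0 = A \<inter> S'"
    define A1 where "A1 = (if q \<in> A then insert q A0 else A0)"
    have fA0: "finite A0" unfolding A0_def using fS' by simp
    have A1: "delta m F A0 \<le> delta m F A1"
    proof (cases "q \<in> A")
      case True
      have "{a\<in>A0. F q a} \<subseteq> N'" unfolding F_def A0_def using pS qS pq by auto
      then have "card {a\<in>A0. F q a} \<le> card N'" using N'S' fS' by (intro card_mono) (auto intro: finite_subset)
      then have "card {a\<in>A0. F q a} \<le> m" using cN' by simp
      then have "delta m F (insert q A0) \<ge> delta m F A0 + int m - int m"
        using delta_insert_ge[OF grF fA0, of q] qS unfolding A0_def by fastforce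
      then show ?thesis unfolding A1_def using True by simp
    qed (simp add: A1_def)
    have fA1: "finite A1" unfolding A1_def using fA0 by simp
    have "delta m F A1 \<le> delta m F A"
    proof (cases "p \<in> A")
      case True
      have AA: "A = insert p A1" unfolding A1_def A0_def using A True unfolding W_def by auto
      have pA1: "p \<notin> A1" unfolding A1_def A0_def using pS pq by auto
      have "{a\<in>A1. F p a} \<subseteq> {q}" unfolding F_def A1_def A0_def using pS pq by auto
      then have "card {a\<in>A1. F p a} \<le> card {q}" by (intro card_mono) simp_all
      then have "card {a\<in>A1. F p a} \<le> 1" by simp
      then have "delta m F (insert p A1) \<ge> delta m F A1 + int m - 1"
        using delta_insert_ge[OF grF fA1 pA1] by fastforce
      then show ?thesis using AA m2 by simp
    next
      case False
      have "A = A1" unfolding A1_def A0_def using A False unfolding W_def by auto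
      then show ?thesis by simp
    qed
    with A1 show "delta m F (A \<inter> S') \<le> delta m F A" unfolding A0_def by simp
  qed
  have K0: "inK0 m W F" unfolding inK0_def
  proof (intro conjI allI impI)
    show "finite W" by (rule fW)
    show "graph W F" by (rule grF)
    fix A assume A: "A \<subseteq> W"
    have "A \<inter> S' \<subseteq> S'" by blast
    then have "delta m F (A \<inter> S') \<ge> 0" using dS' nonneg finite_subset[OF _ fS'] by (metis finite_imageI)
    then show "delta m F A \<ge> 0" using low[OF A] by simp
  qed
  have Sl: "\<forall>A'. enc ` S \<subseteq> A' \<and> A' \<subseteq> W \<longrightarrow> delta m F (enc ` S) \<le> delta m F A'"
  proof (intro allI impI)
    fix A' assume a: "enc ` S \<subseteq> A' \<and> A' \<subseteq> W"
    then have "A' \<inter> S' = enc ` S" unfolding S'_def by blast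
    then show "delta m F (enc ` S) \<le> delta m F A'" using low a by metis
  qed
  have injS: "inj_on enc S" using inj SV by (rule inj_on_subset)
  have eW: "enc ` S \<subseteq> W" unfolding W_def S'_def by blast
  obtain k where k: "inj_on k W" "k ` W \<subseteq> V" "\<forall>x\<in>W. \<forall>y\<in>W. E (k x) (k y) \<longleftrightarrow> F x y" "st (k ` W)"
     "\<forall>s\<in>S. k (enc s) = s"
    using ext[OF S K0 injS eW edS Sl] by blast
  define b where "b = k p"
  define w where "w = k q"
  have pW: "p \<in> W" and qW: "q \<in> W" and S'W: "S' \<subseteq> W" unfolding W_def by auto
  have kS: "k ` S' = S" unfolding S'_def using k(5) by (force simp: image_comp)
  have bV: "b \<in> V" "w \<in> V" unfolding b_def w_def using k(2) pW qW by auto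
  have bS: "b \<notin> S"
  proof
    assume "b \<in> S"
    then obtain s where "s \<in> S'" "k s = k p" using kS unfolding b_def by force
    then have "s = p" using k(1) pW S'W by (meson inj_onD subsetD)
    then show False using pS \<open>s \<in> S'\<close> by simp
  qed
  have wS: "w \<notin> S"
  proof
    assume "w \<in> S"
    then obtain s where "s \<in> S'" "k s = k q" using kS unfolding w_def by force
    then have "s = q" using k(1) qW S'W by (meson inj_onD subsetD)
    then show False using qS \<open>s \<in> S'\<close> by simp
  qed
  have bw: "b \<noteq> w" unfolding b_def w_def using k(1) pW qW pq by (meson inj_onD)
  have Ebw: "E b w" unfolding b_def w_def using k(3) pW qW unfolding F_def by simp
  have Ebs: "\<forall>s\<in>S. \<not> E b s"
  proof
    fix s assume s: "s \<in> S"
    then have es: "enc s \<in> S'" "enc s \<in> W" using S'W unfolding S'_def by auto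
    then have "E b s \<longleftrightarrow> F p (enc s)" unfolding b_def using k(3,5) pW s by metis
    moreover have "\<not> F p (enc s)" unfolding F_def using es pS qS pq by auto
    ultimately show "\<not> E b s" by simp
  qed
  have Ews: "\<forall>s\<in>S. E w s \<longleftrightarrow> s \<in> N"
  proof
    fix s assume s: "s \<in> S"
    then have es: "enc s \<in> S'" "enc s \<in> W" using S'W unfolding S'_def by auto
    then have "E w s \<longleftrightarrow> F q (enc s)" unfolding w_def using k(3,5) qW s by metis
    moreover have "F q (enc s) \<longleftrightarrow> enc s \<in> N'" unfolding F_def using es pS qS pq by auto
    moreover have "enc s \<in> N' \<longleftrightarrow> s \<in> N" unfolding N'_def using inj NV SV s by (meson image_eqI inj_on_image_mem_iff subsetD)
    ultimately show "E w s \<longleftrightarrow> s \<in> N" by simp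
  qed
  have "k ` W = insert b (insert w S)" unfolding W_def b_def w_def using kS by simp
  then have "st (insert b (insert w S))" using k(4) by simp
  then show ?thesis using bV bS wS bw Ebw Ebs Ews by blast
qed

end


lemma chain_fin:
  assumes mono: "\<And>n. C n \<subseteq> C (Suc n)" and "finite F" "F \<subseteq> (\<Union>n. C n)"
  shows "\<exists>n. F \<subseteq> C n"
  using assms(2,3)
proof (induction F rule: finite_induct)
  case empty then show ?case by blast
next
  case (insert x F)
  then obtain n where n: "F \<subseteq> C n" by blast
  obtain n' where n': "x \<in> C n'" using insert by blast
  have "C n \<subseteq> C (max n n')" "C n' \<subseteq> C (max n n')"
    using lift_Suc_mono_le[of C, OF mono] by auto
  then show ?case using n n' by blast
qed

context gen begin

lemma free_V: "free X \<Longrightarrow> X \<subseteq> V" unfolding free_def by blast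
lemma free_le: "free X \<Longrightarrow> finite Y \<Longrightarrow> X \<subseteq> Y \<Longrightarrow> Y \<subseteq> V \<Longrightarrow> int m * int (card X) \<le> \<delta> Y"
  unfolding free_def by blast
lemma st_V: "st S \<Longrightarrow> S \<subseteq> V" unfolding st_def by blast

lemma u_exists:
  assumes X: "finite X" "free X" and S: "finite S" "st S" "X \<subseteq> S" and big: "\<delta> S > int m * int (card X)"
  shows "\<exists>u\<in>S. \<forall>Y. finite Y \<and> insert u X \<subseteq> Y \<and> Y \<subseteq> V \<longrightarrow> \<delta> Y > int m * int (card X)"
proof (rule ccontr)
  assume "\<not> ?thesis"
  then have H: "\<forall>u\<in>S. \<exists>Y. finite Y \<and> insert u X \<subseteq> Y \<and> Y \<subseteq> V \<and> \<delta> Y \<le> int m * int (card X)"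
    by (auto simp: not_less)
  have "\<And>U. U \<subseteq> S \<Longrightarrow> \<exists>Y. finite Y \<and> X \<union> U \<subseteq> Y \<and> Y \<subseteq> V \<and> \<delta> Y \<le> int m * int (card X)"
  proof -
    fix U assume US: "U \<subseteq> S"
    have "finite U" using US S(1) finite_subset by blast
    from this US show "\<exists>Y. finite Y \<and> X \<union> U \<subseteq> Y \<and> Y \<subseteq> V \<and> \<delta> Y \<le> int m * int (card X)"
    proof (induction U rule: finite_induct)
      case empty
      have "\<delta> X \<le> int m * int (card X)" by (rule delta_le)
      then show ?case using X free_V by auto
    next
      case (insert u U)
      then obtain Y where Y: "finite Y" "X \<union> U \<subseteq> Y" "Y \<subseteq> V" "\<delta> Y \<le> int m * int (card X)" by auto
      obtain Yu where Yu: "finite Yu" "insert u X \<subseteq> Yu" "Yu \<subseteq> V" "\<delta> Yu \<le> int m * int (card X)"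
        using H insert by auto
      have s: "\<delta> (Y \<union> Yu) + \<delta> (Y \<inter> Yu) \<le> \<delta> Y + \<delta> Yu" using delta_submod Y Yu by blast
      have "X \<subseteq> Y \<inter> Yu" "finite (Y \<inter> Yu)" "Y \<inter> Yu \<subseteq> V" using Y Yu by auto
      then have "int m * int (card X) \<le> \<delta> (Y \<inter> Yu)" using free_le[OF X(2)] by blast
      with s Y Yu have "\<delta> (Y \<union> Yu) \<le> int m * int (card X)" by linarith
      moreover have "X \<union> insert u U \<subseteq> Y \<union> Yu" using Y Yu by auto
      ultimately show ?case using Y Yu by (intro exI[of _ "Y \<union> Yu"]) auto
    qed
  qed
  then obtain Y where Y: "finite Y" "X \<union> S \<subseteq> Y" "Y \<subseteq> V" "\<delta> Y \<le> int m * int (card X)" by blast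
  then have "\<delta> S \<le> \<delta> Y" using st_le[OF S(2)] by blast
  with Y big show False by linarith
qed

lemma key_step:
  assumes X: "finite X" "free X" and S: "finite S" "st S" "X \<subseteq> S" "v \<in> S" "card S \<ge> m"
    and d: "\<delta> S = int m * int (card X) + int (Suc k)"
  shows "\<exists>b S'. finite S' \<and> st S' \<and> insert b X \<subseteq> S' \<and> v \<in> S' \<and> card S' \<ge> m \<and> free (insert b X)
     \<and> b \<notin> X \<and> \<delta> S' = int m * int (card (insert b X)) + int k"
proof -
  obtain u where u: "u \<in> S" "\<And>Y. finite Y \<Longrightarrow> insert u X \<subseteq> Y \<Longrightarrow> Y \<subseteq> V \<Longrightarrow> \<delta> Y > int m * int (card X)"
    using u_exists[OF X S(1,2,3)] d by fastforce
  have "m - 1 \<le> card (S - {u})" using S(1) S(5) u(1) by simp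
  then obtain N0 where N0: "N0 \<subseteq> S - {u}" "card N0 = m - 1" "finite N0" by (rule obtain_subset_with_card_n)
  define N where "N = insert u N0"
  have NS: "N \<subseteq> S" "u \<in> N" using N0 u unfolding N_def by auto
  have "u \<notin> N0" using N0(1) by blast
  then have cN: "card N = m" unfolding N_def using N0 m2 by simp
  obtain b w where bw: "b \<in> V - S" "w \<in> V - S" "b \<noteq> w" "E b w" "\<forall>s\<in>S. \<not> E b s"
     "\<forall>s\<in>S. E w s \<longleftrightarrow> s \<in> N" "st (insert b (insert w S))"
    using gadget[OF S(1,2) NS(1) cN] by blast
  define S' where "S' = insert b (insert w S)"
  have SV: "S \<subseteq> V" using st_V S by blast
  have bX: "b \<notin> X" using bw S(3) by blast
  have cX: "card (insert b X) = Suc (card X)" using bX X by simp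
  have d1: "\<delta> (insert w S) = \<delta> S + int m - int (card N)"
  proof -
    have "{a\<in>S. E w a} = N" using bw(6) NS by auto
    then show ?thesis using delta_insert'[OF S(1)] bw(2) by simp
  qed
  have d2: "\<delta> S' = \<delta> (insert w S) + int m - 1"
  proof -
    have "{a\<in>insert w S. E b a} = {w}" using bw(4,5) by auto
    then show ?thesis unfolding S'_def using delta_insert'[of "insert w S" b] S(1) bw(1,3) by simp
  qed
  have dS': "\<delta> S' = int m * int (card (insert b X)) + int k"
  proof -
    have "int m * int (card (insert b X)) = int m * int (card X) + int m" using cX by (simp add: algebra_simps)
    moreover have "int (Suc k) = int k + 1" by simp
    ultimately show ?thesis using d1 d2 d cN by linarith
  qed
  have fS': "finite S'" unfolding S'_def using S by simp
  have "card S \<le> card S'" by (rule card_mono[OF fS']) (auto simp: S'_def)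
  then have cS': "card S' \<ge> m" using S(5) by linarith
  have free': "free (insert b X)" unfolding free_def
  proof (intro conjI allI impI)
    show "insert b X \<subseteq> V" using bw(1) free_V[OF X(2)] by blast
    fix Y assume Y: "finite Y \<and> insert b X \<subseteq> Y \<and> Y \<subseteq> V"
    have le: "\<delta> (Y \<inter> S') \<le> \<delta> Y" using st_Int_le[OF fS'] bw(7) Y unfolding S'_def by blast
    define Y0 where "Y0 = Y \<inter> S"
    have fY0: "finite Y0" "Y0 \<subseteq> V" "X \<subseteq> Y0" unfolding Y0_def using Y S(3) by auto
    have dY0: "int m * int (card X) \<le> \<delta> Y0" using free_le[OF X(2) fY0(1) fY0(3) fY0(2)] .
    have bY0: "b \<notin> Y0" "w \<notin> Y0" unfolding Y0_def using bw by auto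
    have Eb0: "{a\<in>Y0. E b a} = {}" using bw(5) unfolding Y0_def by auto
    show "int m * int (card (insert b X)) \<le> \<delta> Y"
    proof (cases "w \<in> Y")
      case False
      then have "Y \<inter> S' = insert b Y0" unfolding S'_def Y0_def using Y by auto
      moreover have "\<delta> (insert b Y0) = \<delta> Y0 + int m" using delta_insert'[OF fY0(1) bY0(1)] Eb0 by simp
      ultimately show ?thesis using le dY0 cX by (simp add: algebra_simps)
    next
      case True
      then have YS': "Y \<inter> S' = insert b (insert w Y0)" unfolding S'_def Y0_def using Y by auto
      have ew: "{a\<in>Y0. E w a} = Y0 \<inter> N" using bw(6) unfolding Y0_def by auto
      have eb: "{a\<in>insert w Y0. E b a} = {w}" using bw(4) Eb0 by auto
      have dw: "\<delta> (insert w Y0) = \<delta> Y0 + int m - int (card (Y0 \<inter> N))"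
        using delta_insert'[OF fY0(1) bY0(2)] ew by simp
      have db: "\<delta> (insert b (insert w Y0)) = \<delta> (insert w Y0) + int m - 1"
        using delta_insert'[of "insert w Y0" b] fY0(1) bY0 bw(3) eb by simp
      have "\<delta> Y0 - int (card (Y0 \<inter> N)) \<ge> int m * int (card X) + 1 - int m"
      proof (cases "N \<subseteq> Y0")
        case True
        then have "insert u X \<subseteq> Y0" using NS fY0 by auto
        then have "\<delta> Y0 > int m * int (card X)" using u(2) fY0 by blast
        moreover have "card (Y0 \<inter> N) = m" using True cN by (simp add: Int_absorb1)
        ultimately show ?thesis by simp
      next
        case False
        have fN: "finite N" using cN m2 card.infinite by fastforce
        have "Y0 \<inter> N \<subset> N" using False by blast
        then have "card (Y0 \<inter> N) < m" using psubset_card_mono[OF fN] cN by simp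
        then show ?thesis using dY0 by linarith
      qed
      moreover have "\<delta> (Y \<inter> S') = \<delta> (insert b (insert w Y0))" using YS' by simp
      ultimately have "\<delta> (Y \<inter> S') \<ge> int m * int (card X) + int m" using dw db by linarith
      then show ?thesis using le cX by (simp add: algebra_simps)
    qed
  qed
  show ?thesis
    apply (rule exI[of _ b], rule exI[of _ S'])
    using fS' bw(7) S(3,4) cS' free' bX dS' unfolding S'_def by auto
qed

lemma key:
  "\<forall>X S. finite X \<and> free X \<and> finite S \<and> st S \<and> X \<subseteq> S \<and> v \<in> S \<and> card S \<ge> m
      \<and> \<delta> S = int m * int (card X) + int k \<longrightarrow>
   (\<exists>X'. X \<subseteq> X' \<and> finite X' \<and> free X' \<and> (\<exists>D. finite D \<and> D \<subseteq> V \<and> v \<in> D \<and> \<delta> D = int m * int (card (D \<inter> X'))))"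
proof (induction k)
  case 0
  show ?case
  proof (intro allI impI)
    fix X S assume a: "finite X \<and> free X \<and> finite S \<and> st S \<and> X \<subseteq> S \<and> v \<in> S \<and> card S \<ge> m
      \<and> \<delta> S = int m * int (card X) + int 0"
    then have "S \<inter> X = X" by blast
    then have "finite S \<and> S \<subseteq> V \<and> v \<in> S \<and> \<delta> S = int m * int (card (S \<inter> X))"
      using a st_V by auto
    then show "\<exists>X'. X \<subseteq> X' \<and> finite X' \<and> free X' \<and> (\<exists>D. finite D \<and> D \<subseteq> V \<and> v \<in> D \<and> \<delta> D = int m * int (card (D \<inter> X')))"
      using a by blast
  qed
next
  case (Suc k)
  show ?case
  proof (intro allI impI)
    fix X S assume a: "finite X \<and> free X \<and> finite S \<and> st S \<and> X \<subseteq> S \<and> v \<in> S \<and> card S \<ge> m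
      \<and> \<delta> S = int m * int (card X) + int (Suc k)"
    then obtain b S' where b: "finite S'" "st S'" "insert b X \<subseteq> S'" "v \<in> S'" "card S' \<ge> m" "free (insert b X)"
      "\<delta> S' = int m * int (card (insert b X)) + int k"
      using key_step[of X S v k] by blast
    then obtain X' where "insert b X \<subseteq> X'" "finite X'" "free X'" "\<exists>D. finite D \<and> D \<subseteq> V \<and> v \<in> D \<and> \<delta> D = int m * int (card (D \<inter> X'))"
      using Suc.IH a by (meson finite_insert)
    then show "\<exists>X'. X \<subseteq> X' \<and> finite X' \<and> free X' \<and> (\<exists>D. finite D \<and> D \<subseteq> V \<and> v \<in> D \<and> \<delta> D = int m * int (card (D \<inter> X')))"
      by blast
  qed
qed

lemma V_big: "\<exists>T. T \<subseteq> V \<and> finite T \<and> card T = m"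
proof -
  have "inK0 m {0..<m} (\<lambda>_ _. False)" unfolding inK0_def graph_def delta_def edges_def by simp
  then obtain h where h: "inj_on h {0..<m}" "h ` {0..<m} \<subseteq> V" using univ by blast
  then show ?thesis by (intro exI[of _ "h ` {0..<m}"]) (simp add: card_image)
qed

lemma key_final:
  assumes X: "finite X" "free X" and v: "v \<in> V"
  shows "\<exists>X'. X \<subseteq> X' \<and> finite X' \<and> free X' \<and> (\<exists>D. finite D \<and> D \<subseteq> V \<and> v \<in> D \<and> \<delta> D = int m * int (card (D \<inter> X')))"
proof -
  obtain C where C: "\<forall>n. finite (C n) \<and> strong m E (C n) V \<and> C n \<subseteq> C (Suc n)" "(\<Union>n. C n) = V"
    by (rule chain)
  obtain T where T: "T \<subseteq> V" "finite T" "card T = m" using V_big by blast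
  have sub: "insert v (X \<union> T) \<subseteq> (\<Union>n. C n)" unfolding C(2) using v T(1) free_V[OF X(2)] by blast
  have fin: "finite (insert v (X \<union> T))" using X T by simp
  have mono: "\<And>n. C n \<subseteq> C (Suc n)" using C(1) by blast
  obtain n where n: "insert v (X \<union> T) \<subseteq> C n" using chain_fin[OF mono fin sub] by blast
  define S where "S = C n"
  have S: "finite S" "st S" using C(1) strong_st unfolding S_def by auto
  have "T \<subseteq> S" using n unfolding S_def by blast
  then have cS: "card S \<ge> m" using card_mono[OF S(1)] T(3) by blast
  have XS: "X \<subseteq> S" "v \<in> S" using n unfolding S_def by auto
  have "int m * int (card X) \<le> \<delta> S" using free_le[OF X(2) S(1) XS(1) st_V[OF S(2)]] .
  then have "\<delta> S - int m * int (card X) \<ge> 0" by simp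
  then obtain k where "\<delta> S - int m * int (card X) = int k" using nonneg_int_cases by metis
  then have k: "\<delta> S = int m * int (card X) + int k" by simp
  show ?thesis using key[of v k] X S XS cS k by blast
qed

end


context gen begin

lemma cl_prop:
  assumes SD: "S \<subseteq> D" and D: "finite D" "st D"
  shows "finite (cl m V E S) \<and> S \<subseteq> cl m V E S \<and> st (cl m V E S) \<and> cl m V E S \<subseteq> D"
proof -
  define P' where "P' = (\<lambda>C. C \<subseteq> D \<and> S \<subseteq> C \<and> st C)"
  have "P' D" unfolding P'_def using SD D by blast
  then obtain C0 where C0: "P' C0" "\<And>C. P' C \<Longrightarrow> card C0 \<le> card C"
    using ex_has_least_nat[of P' D card] by blast
  have fC0: "finite C0" using C0(1) D(1) finite_subset unfolding P'_def by blast
  define P where "P = (\<lambda>C. finite C \<and> S \<subseteq> C \<and> strong m E C V \<and>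
        (\<forall>C'. finite C' \<and> S \<subseteq> C' \<and> strong m E C' V \<longrightarrow> C \<subseteq> C'))"
  have PC0: "P C0" unfolding P_def
  proof (intro conjI allI impI)
    show "finite C0" by (rule fC0)
    show "S \<subseteq> C0" using C0(1) unfolding P'_def by blast
    show "strong m E C0 V" using C0(1) strong_st unfolding P'_def by blast
    fix C' assume C': "finite C' \<and> S \<subseteq> C' \<and> strong m E C' V"
    have "st (C0 \<inter> C')" using st_Int[OF fC0] C' C0(1) strong_st unfolding P'_def by blast
    then have "P' (C0 \<inter> C')" using C0(1) C' unfolding P'_def by blast
    then have "card C0 \<le> card (C0 \<inter> C')" using C0(2) by blast
    then have "C0 \<inter> C' = C0" using card_subset_eq[OF fC0, of "C0 \<inter> C'"] card_mono[OF fC0, of "C0 \<inter> C'"] by simp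
    then show "C0 \<subseteq> C'" by blast
  qed
  have uniq: "\<exists>!C. P C"
  proof
    show "P C0" by (rule PC0)
    fix C assume "P C"
    then show "C = C0" using PC0 unfolding P_def by (meson subset_antisym)
  qed
  have "cl m V E S = C0" unfolding cl_def using the1_equality[OF uniq PC0] unfolding P_def .
  then show ?thesis using C0(1) fC0 unfolding P'_def by simp
qed

definition vv where "vv = from_nat_into V"

primrec Xs where
  "Xs 0 = {}"
| "Xs (Suc n) = (SOME X'. Xs n \<subseteq> X' \<and> finite X' \<and> free X' \<and>
      (\<exists>D. finite D \<and> D \<subseteq> V \<and> vv n \<in> D \<and> \<delta> D = int m * int (card (D \<inter> X'))))"

definition BB where "BB = (\<Union>n. Xs n)"

lemma V_ne: "V \<noteq> {}" using V_big m2 by fastforce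

lemma vv_range: "range vv = V" unfolding vv_def using V_ne ctbl by simp

lemma free_empty: "free {}" unfolding free_def using nonneg by simp

lemma Xs_prop: "finite (Xs n) \<and> free (Xs n)"
proof (induction n)
  case 0 then show ?case using free_empty by simp
next
  case (Suc n)
  have "vv n \<in> V" using vv_range by blast
  then have "\<exists>X'. Xs n \<subseteq> X' \<and> finite X' \<and> free X' \<and>
      (\<exists>D. finite D \<and> D \<subseteq> V \<and> vv n \<in> D \<and> \<delta> D = int m * int (card (D \<inter> X')))"
    using key_final Suc by blast
  from someI_ex[OF this] show ?case by simp
qed

lemma Xs_step: "Xs n \<subseteq> Xs (Suc n) \<and>
      (\<exists>D. finite D \<and> D \<subseteq> V \<and> vv n \<in> D \<and> \<delta> D = int m * int (card (D \<inter> Xs (Suc n))))"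
proof -
  have "vv n \<in> V" using vv_range by blast
  then have "\<exists>X'. Xs n \<subseteq> X' \<and> finite X' \<and> free X' \<and>
      (\<exists>D. finite D \<and> D \<subseteq> V \<and> vv n \<in> D \<and> \<delta> D = int m * int (card (D \<inter> X')))"
    using key_final Xs_prop by blast
  from someI_ex[OF this] show ?thesis by simp
qed

lemma BB_V: "BB \<subseteq> V" unfolding BB_def using Xs_prop free_V by blast

lemma BB_count: "countable BB" unfolding BB_def using Xs_prop by (intro countable_UN) (auto intro: countable_finite)

lemma BB_free: assumes "X0 \<subseteq> BB" "finite X0" shows "free X0"
proof -
  have mono: "\<And>n. Xs n \<subseteq> Xs (Suc n)" using Xs_step by blast
  have "X0 \<subseteq> (\<Union>n. Xs n)" using assms(1) unfolding BB_def .
  then obtain n where "X0 \<subseteq> Xs n" using chain_fin[of Xs X0] mono assms(2) by blast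
  then show ?thesis using free_subset Xs_prop by blast
qed

definition Q where "Q A \<longleftrightarrow> finite A \<and> A \<subseteq> V \<and> \<delta> A = int m * int (card (A \<inter> BB))"

lemma Qlow: assumes "finite A" "A \<subseteq> V" shows "int m * int (card (A \<inter> BB)) \<le> \<delta> A"
proof -
  have "free (A \<inter> BB)" using BB_free assms by auto
  then show ?thesis using free_le assms by blast
qed

lemma Q_st: assumes "Q A" shows "st A"
  unfolding st_def
proof (intro conjI allI impI)
  show "A \<subseteq> V" using assms unfolding Q_def by blast
  fix Y assume Y: "finite Y \<and> A \<subseteq> Y \<and> Y \<subseteq> V"
  have "card (A \<inter> BB) \<le> card (Y \<inter> BB)" using Y by (intro card_mono) auto
  then have "int m * int (card (A \<inter> BB)) \<le> int m * int (card (Y \<inter> BB))" by (simp add: mult_left_mono)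
  then show "\<delta> A \<le> \<delta> Y" using Qlow[of Y] Y assms unfolding Q_def by linarith
qed

lemma Q_empty: "Q {}" unfolding Q_def by simp

lemma Q_cover: assumes "x \<in> V" shows "\<exists>D. Q D \<and> x \<in> D"
proof -
  obtain n where n: "x = vv n" using vv_range assms by blast
  obtain D where D: "finite D" "D \<subseteq> V" "x \<in> D" "\<delta> D = int m * int (card (D \<inter> Xs (Suc n)))"
    using Xs_step n by blast
  have "Xs (Suc n) \<subseteq> BB" unfolding BB_def by blast
  then have "card (D \<inter> Xs (Suc n)) \<le> card (D \<inter> BB)" using D(1) by (intro card_mono) auto
  then have "int m * int (card (D \<inter> Xs (Suc n))) \<le> int m * int (card (D \<inter> BB))" by (simp add: mult_left_mono)
  then have "\<delta> D = int m * int (card (D \<inter> BB))" using Qlow[OF D(1,2)] D(4) by linarith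
  then show ?thesis using D unfolding Q_def by blast
qed

lemma Q_Un: assumes "Q A" "Q A'" shows "Q (A \<union> A')"
proof -
  have f: "finite A" "finite A'" "A \<subseteq> V" "A' \<subseteq> V" using assms unfolding Q_def by auto
  have s: "\<delta> (A \<union> A') + \<delta> (A \<inter> A') \<le> \<delta> A + \<delta> A'" using delta_submod f by blast
  have l: "int m * int (card ((A \<inter> A') \<inter> BB)) \<le> \<delta> (A \<inter> A')" using Qlow f by auto
  have c: "card ((A \<union> A') \<inter> BB) + card ((A \<inter> A') \<inter> BB) = card (A \<inter> BB) + card (A' \<inter> BB)"
  proof -
    have "(A \<union> A') \<inter> BB = (A \<inter> BB) \<union> (A' \<inter> BB)" "(A \<inter> A') \<inter> BB = (A \<inter> BB) \<inter> (A' \<inter> BB)" by auto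
    then show ?thesis using card_Un_Int[of "A \<inter> BB" "A' \<inter> BB"] f by simp
  qed
  then have c': "int m * int (card ((A \<union> A') \<inter> BB)) + int m * int (card ((A \<inter> A') \<inter> BB))
     = int m * int (card (A \<inter> BB)) + int m * int (card (A' \<inter> BB))"
    by (metis distrib_left of_nat_add)
  have "\<delta> (A \<union> A') \<le> int m * int (card ((A \<union> A') \<inter> BB))" using s l c' assms unfolding Q_def by linarith
  moreover have "int m * int (card ((A \<union> A') \<inter> BB)) \<le> \<delta> (A \<union> A')" using Qlow f by auto
  ultimately show ?thesis using f unfolding Q_def by auto
qed

lemma Q_fin: assumes "finite F" "F \<subseteq> V" shows "\<exists>D. Q D \<and> F \<subseteq> D"
  using assms
proof (induction F rule: finite_induct)
  case empty then show ?case using Q_empty by blast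
next
  case (insert x F)
  then obtain D where D: "Q D" "F \<subseteq> D" by auto
  have "x \<in> V" using insert.prems by blast
  then obtain D' where D': "Q D'" "x \<in> D'" using Q_cover by blast
  show ?case using Q_Un[OF D(1) D'(1)] D D' by auto
qed

lemma Q_BB: assumes "X0 \<subseteq> BB" "finite X0" shows "Q X0"
proof -
  have "int m * int (card X0) \<le> \<delta> X0" using BB_free[OF assms] free_le assms BB_V by blast
  moreover have "\<delta> X0 \<le> int m * int (card X0)" by (rule delta_le)
  moreover have "X0 \<inter> BB = X0" using assms by blast
  ultimately show ?thesis using assms BB_V unfolding Q_def by auto
qed

lemma noE: assumes "Q A" "b \<in> BB" "b \<notin> A" "a \<in> A" shows "\<not> E b a"
proof
  assume Eba: "E b a"
  have f: "finite A" "A \<subseteq> V" using assms unfolding Q_def by auto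
  have bV: "b \<in> V" using BB_V assms(2) by blast
  have "card (insert b A \<inter> BB) = Suc (card (A \<inter> BB))" using assms f by simp
  then have "int m * int (card (A \<inter> BB)) + int m \<le> \<delta> (insert b A)"
    using Qlow[of "insert b A"] f bV by (simp add: algebra_simps)
  moreover have "\<delta> (insert b A) = \<delta> A + int m - int (card {a\<in>A. E b a})" using delta_insert' f assms(3) by blast
  moreover have "card {a\<in>A. E b a} > 0" using Eba assms(4) f by (auto simp: card_gt_0_iff)
  ultimately show False using assms(1) unfolding Q_def by linarith
qed

lemma BB_noE: assumes "b \<in> BB" "b' \<in> BB" shows "\<not> E b b'"
proof (cases "b = b'")
  case True then show ?thesis using irrE by simp
next
  case False
  have "Q {b'}" using Q_BB assms by auto
  then show ?thesis using noE assms False by blast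
qed

lemma part1: "gcl m V E BB = V"
proof
  show "gcl m V E BB \<subseteq> V" unfolding gcl_def by blast
  show "V \<subseteq> gcl m V E BB"
  proof
    fix x assume x: "x \<in> V"
    obtain D where D: "Q D" "x \<in> D" using Q_cover x by blast
    define A where "A = D \<inter> BB"
    have fD: "finite D" "D \<subseteq> V" using D unfolding Q_def by auto
    have fA: "finite A" "A \<subseteq> BB" unfolding A_def using fD by auto
    have QA: "Q A" using Q_BB fA by auto
    have stD: "st D" using Q_st D by blast
    have c1: "cl m V E A = A"
    proof -
      have "finite (cl m V E A) \<and> A \<subseteq> cl m V E A \<and> st (cl m V E A) \<and> cl m V E A \<subseteq> A"
        using cl_prop[of A A] fA Q_st[OF QA] by blast
      then show ?thesis by blast
    qed
    have c2: "finite (cl m V E (insert x A)) \<and> insert x A \<subseteq> cl m V E (insert x A) \<and> st (cl m V E (insert x A)) \<and> cl m V E (insert x A) \<subseteq> D"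
      using cl_prop[of "insert x A" D] fD stD D(2) unfolding A_def by blast
    define C where "C = cl m V E (insert x A)"
    have C: "finite C" "insert x A \<subseteq> C" "st C" "C \<subseteq> D" using c2 unfolding C_def by auto
    have "\<delta> C \<le> \<delta> D" using st_le[OF C(3) fD(1) C(4) fD(2)] .
    moreover have "\<delta> D = int m * int (card A)" using D(1) unfolding Q_def A_def by simp
    moreover have "int m * int (card (C \<inter> BB)) \<le> \<delta> C" using Qlow C fD by blast
    moreover have "card A \<le> card (C \<inter> BB)" using C fA by (intro card_mono) auto
    moreover have "\<delta> A = int m * int (card A)" using QA fA unfolding Q_def by (simp add: Int_absorb2)
    ultimately have "\<delta> C = \<delta> A"
      by (smt (verit) mult_left_mono of_nat_0_le_iff of_nat_mono)
    then have "reldim m V E x A = 0" unfolding reldim_def dim_def C_def c1 by simp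
    then show "x \<in> gcl m V E BB" unfolding gcl_def using x fA by blast
  qed
qed

lemma part2: assumes "B0 \<subseteq> BB" "finite B0" shows "strong m E B0 V"
  using Q_st[OF Q_BB[OF assms]] strong_st by blast

end


context gen begin

definition PI where "PI \<sigma> R \<longleftrightarrow> finite R \<and> Q (Domain R) \<and> Q (Range R) \<and>
   (\<forall>x y x' y'. (x,y) \<in> R \<longrightarrow> (x',y') \<in> R \<longrightarrow> (x = x' \<longleftrightarrow> y = y') \<and> (E x x' \<longleftrightarrow> E y y')) \<and>
   (\<forall>x y. (x,y) \<in> R \<longrightarrow> (x \<in> BB \<longleftrightarrow> y \<in> BB)) \<and> (\<forall>x y. (x,y) \<in> R \<longrightarrow> x \<in> BB \<longrightarrow> y = \<sigma> x)"

lemma PI_conv: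
  assumes "PI \<sigma> R" "\<forall>b\<in>BB. \<tau> (\<sigma> b) = b"
  shows "PI \<tau> (R\<inverse>)"
  unfolding PI_def
proof (intro conjI allI impI)
  show "finite (R\<inverse>)" using assms unfolding PI_def by simp
  show "Q (Domain (R\<inverse>))" "Q (Range (R\<inverse>))" using assms unfolding PI_def by simp_all
  fix x y x' y' assume "(x,y) \<in> R\<inverse>" "(x',y') \<in> R\<inverse>"
  then have "(y,x) \<in> R" "(y',x') \<in> R" by auto
  then show "x = x' \<longleftrightarrow> y = y'" "E x x' \<longleftrightarrow> E y y'" using assms(1) unfolding PI_def by blast+
next
  fix x y assume "(x,y) \<in> R\<inverse>"
  then have r: "(y,x) \<in> R" by auto
  then show "x \<in> BB \<longleftrightarrow> y \<in> BB" using assms(1) unfolding PI_def by blast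
  assume "x \<in> BB"
  then have "y \<in> BB" "x = \<sigma> y" using r assms(1) unfolding PI_def by blast+
  then show "y = \<tau> x" using assms(2) by simp
qed

lemma forth:
  assumes sig: "bij_betw \<sigma> BB BB" and R: "PI \<sigma> R" and x: "x \<in> V"
  shows "\<exists>R'. R \<subseteq> R' \<and> PI \<sigma> R' \<and> x \<in> Domain R'"
proof -
  have Rfin: "finite R" and QA: "Q (Domain R)" and QA': "Q (Range R)"
    and Rfun: "\<And>x y x' y'. (x,y) \<in> R \<Longrightarrow> (x',y') \<in> R \<Longrightarrow> (x = x' \<longleftrightarrow> y = y')"
    and RE: "\<And>x y x' y'. (x,y) \<in> R \<Longrightarrow> (x',y') \<in> R \<Longrightarrow> (E x x' \<longleftrightarrow> E y y')"
    and RB: "\<And>x y. (x,y) \<in> R \<Longrightarrow> (x \<in> BB \<longleftrightarrow> y \<in> BB)"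
    and Rs: "\<And>x y. (x,y) \<in> R \<Longrightarrow> x \<in> BB \<Longrightarrow> y = \<sigma> x"
    using R unfolding PI_def by blast+
  have sinj: "inj_on \<sigma> BB" and sBB: "\<sigma> ` BB = BB" using sig unfolding bij_betw_def by auto
  define A where "A = Domain R"
  define A' where "A' = Range R"
  define f where "f = (\<lambda>a. THE y. (a,y) \<in> R)"
  have Rf: "\<And>a y. (a,y) \<in> R \<Longrightarrow> f a = y"
    unfolding f_def using Rfun by (intro the_equality) blast+
  have Af: "\<And>a. a \<in> A \<Longrightarrow> (a, f a) \<in> R" unfolding A_def using Rf by force
  obtain Dx where Dx: "Q Dx" "x \<in> Dx" using Q_cover x by blast
  define D where "D = A \<union> Dx"
  have QD: "Q D" unfolding D_def A_def using Q_Un QA Dx by blast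
  have fD: "finite D" "D \<subseteq> V" using QD unfolding Q_def by auto
  define B1 where "B1 = D \<inter> BB"
  have fB1: "finite B1" "B1 \<subseteq> BB" unfolding B1_def using fD by auto
  define A2 where "A2 = A \<union> B1"
  define A2' where "A2' = A' \<union> \<sigma> ` B1"
  have QA2: "Q A2" unfolding A2_def using Q_Un QA Q_BB fB1 unfolding A_def by blast
  have sB1: "\<sigma> ` B1 \<subseteq> BB" "finite (\<sigma> ` B1)" using fB1 sBB by auto
  have QA2': "Q A2'" unfolding A2'_def using Q_Un QA' Q_BB sB1 unfolding A'_def by blast
  define h where "h = (\<lambda>a. if a \<in> A then f a else \<sigma> a)"
  have hBB: "\<And>a. a \<in> A2 \<Longrightarrow> (h a \<in> BB \<longleftrightarrow> a \<in> BB) \<and> (a \<in> BB \<longrightarrow> h a = \<sigma> a)"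
  proof -
    fix a assume a: "a \<in> A2"
    show "(h a \<in> BB \<longleftrightarrow> a \<in> BB) \<and> (a \<in> BB \<longrightarrow> h a = \<sigma> a)"
    proof (cases "a \<in> A")
      case True
      then have r: "(a, f a) \<in> R" "h a = f a" using Af unfolding h_def by auto
      have "a \<in> BB \<Longrightarrow> f a = \<sigma> a" using Rs[OF r(1)] by blast
      then show ?thesis using RB[OF r(1)] r(2) by auto
    next
      case False
      then have "a \<in> BB" using a fB1 unfolding A2_def by auto
      then show ?thesis unfolding h_def using False sBB by auto
    qed
  qed
  have hB1: "\<And>a. a \<in> B1 \<Longrightarrow> h a = \<sigma> a" using hBB fB1 unfolding A2_def by blast
  have sA': "\<And>b. b \<in> B1 \<Longrightarrow> b \<notin> A \<Longrightarrow> \<sigma> b \<notin> A'"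
  proof
    fix b assume b: "b \<in> B1" "b \<notin> A" "\<sigma> b \<in> A'"
    then obtain a' where a': "(a', \<sigma> b) \<in> R" unfolding A'_def by blast
    have "\<sigma> b \<in> BB" using b fB1 sBB by auto
    then have "a' \<in> BB" using RB a' by blast
    then have "\<sigma> b = \<sigma> a'" using Rs a' by blast
    then have "b = a'" using sinj \<open>a' \<in> BB\<close> b fB1 by (meson inj_onD subsetD)
    then show False using a' b unfolding A_def by blast
  qed
  have img: "h ` A2 = A2'"
  proof -
    have "h ` A = A'" unfolding h_def A'_def A_def using Rf Af unfolding A_def by force
    moreover have "h ` B1 = \<sigma> ` B1" using hB1 by simp
    ultimately show ?thesis unfolding A2_def A2'_def by (simp add: image_Un)
  qed
  have inj: "inj_on h A2"
  proof
    fix a1 a2 assume a: "a1 \<in> A2" "a2 \<in> A2" "h a1 = h a2"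
    show "a1 = a2"
    proof (cases "a1 \<in> BB")
      case True
      then have "h a2 \<in> BB" using hBB a by metis
      then have "a2 \<in> BB" using hBB a by blast
      then have "\<sigma> a1 = \<sigma> a2" using hBB a True by metis
      then show ?thesis using sinj True \<open>a2 \<in> BB\<close> by (meson inj_onD)
    next
      case False
      then have "h a2 \<notin> BB" using hBB a by metis
      then have "a2 \<notin> BB" using hBB a by blast
      then have "a1 \<in> A" "a2 \<in> A" using a False fB1 unfolding A2_def by auto
      then have r: "(a1, f a1) \<in> R" "(a2, f a2) \<in> R" using Af by blast+
      have "f a1 = f a2" using a(3) \<open>a1 \<in> A\<close> \<open>a2 \<in> A\<close> unfolding h_def by simp
      then show ?thesis using Rfun[OF r] by simp
    qed
  qed
  have half: "\<And>a1 a2. a1 \<in> A2 \<Longrightarrow> a2 \<in> A2 \<Longrightarrow> a2 \<notin> A \<Longrightarrow> \<not> E a1 a2 \<and> \<not> E (h a1) (h a2)"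
  proof -
    fix a1 a2 assume a: "a1 \<in> A2" "a2 \<in> A2" "a2 \<notin> A"
    then have a2B: "a2 \<in> B1" "a2 \<in> BB" using fB1 unfolding A2_def by auto
    have h2: "h a2 = \<sigma> a2" "\<sigma> a2 \<in> BB" using hB1 a2B sBB by auto
    have e1: "\<not> E a1 a2"
    proof (cases "a1 \<in> BB")
      case True then show ?thesis using BB_noE a2B by blast
    next
      case False
      then have "a1 \<in> A" using a fB1 unfolding A2_def by auto
      then have "\<not> E a2 a1" using noE[OF QA] a2B a(3) unfolding A_def by blast
      then show ?thesis using symE by blast
    qed
    have e2: "\<not> E (h a1) (h a2)"
    proof (cases "a1 \<in> BB")
      case True
      then have "h a1 \<in> BB" using hBB a by blast
      then show ?thesis using BB_noE h2 by metis
    next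
      case False
      then have a1A: "a1 \<in> A" using a fB1 unfolding A2_def by auto
      then have "h a1 \<in> A'" unfolding h_def A'_def using Af by force
      moreover have "\<sigma> a2 \<notin> A'" using sA' a2B a(3) by blast
      ultimately have "\<not> E (\<sigma> a2) (h a1)" using noE[OF QA'] h2 unfolding A'_def by blast
      then show ?thesis using symE h2 by metis
    qed
    show "\<not> E a1 a2 \<and> \<not> E (h a1) (h a2)" using e1 e2 by blast
  qed
  have edges: "\<forall>a1\<in>A2. \<forall>a2\<in>A2. E (h a1) (h a2) \<longleftrightarrow> E a1 a2"
  proof (intro ballI)
    fix a1 a2 assume a: "a1 \<in> A2" "a2 \<in> A2"
    show "E (h a1) (h a2) \<longleftrightarrow> E a1 a2"
    proof (cases "a1 \<in> A \<and> a2 \<in> A")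
      case True
      then have "(a1, h a1) \<in> R" "(a2, h a2) \<in> R" using Af unfolding h_def by auto
      then show ?thesis using RE by blast
    next
      case False
      show ?thesis
      proof (cases "a1 \<in> A")
        case False
        then have "\<not> E a2 a1 \<and> \<not> E (h a2) (h a1)" using half a by blast
        then show ?thesis using symE by blast
      next
        case True
        then have "a2 \<notin> A" using False by blast
        then show ?thesis using half a by blast
      qed
    qed
  qed
  have fA2: "finite A2" "finite A2'" using QA2 QA2' unfolding Q_def by auto
  obtain g where g: "automorphism V E g" "\<forall>a\<in>A2. g a = h a"
    using homog[OF fA2 _ _ _ edges] Q_st[OF QA2] Q_st[OF QA2'] strong_st inj img
    unfolding bij_betw_def by blast
  have gbij: "bij_betw g V V" and gE: "\<forall>x\<in>V. \<forall>y\<in>V. E (g x) (g y) \<longleftrightarrow> E x y"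
    using g(1) unfolding automorphism_def by blast+
  have ginj: "inj_on g V" using gbij bij_betw_imp_inj_on by blast
  have gV: "g ` V = V" using gbij bij_betw_imp_surj_on by blast
  define R' where "R' = (\<lambda>d. (d, g d)) ` D"
  have AD: "A \<subseteq> D" "B1 \<subseteq> D" unfolding D_def B1_def by auto
  have gB1: "\<And>b. b \<in> B1 \<Longrightarrow> g b = \<sigma> b" using g(2) hB1 unfolding A2_def by auto
  have sub: "R \<subseteq> R'"
  proof
    fix p assume p: "p \<in> R"
    obtain a y where ay: "p = (a,y)" by (cases p)
    then have a: "a \<in> A" "f a = y" using p Rf unfolding A_def by auto
    then have "g a = y" using g(2) unfolding A2_def h_def by auto
    then show "p \<in> R'" unfolding R'_def using ay a AD by auto
  qed
  have DomR': "Domain R' = D" unfolding R'_def by force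
  have RanR': "Range R' = g ` D" unfolding R'_def by force
  have gDV: "g ` D \<subseteq> V" using fD gV by blast
  have cB1: "card (\<sigma> ` B1) = card B1" using sinj fB1 by (simp add: card_image inj_on_subset)
  have dgD: "\<delta> (g ` D) = \<delta> D" using aut_delta[OF g(1) fD(2)] .
  have DB: "D \<inter> BB = B1" unfolding B1_def by simp
  have gDB: "g ` D \<inter> BB = \<sigma> ` B1"
  proof -
    have s1: "\<sigma> ` B1 \<subseteq> g ` D \<inter> BB" using gB1 AD sB1 by force
    have f1: "finite (g ` D \<inter> BB)" using fD by simp
    have "int m * int (card (g ` D \<inter> BB)) \<le> \<delta> (g ` D)" using Qlow[of "g ` D"] fD gDV by simp
    also have "\<dots> = int m * int (card B1)" using dgD QD DB unfolding Q_def by simp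
    finally have "card (g ` D \<inter> BB) \<le> card B1" using m2 by simp
    then have "card (\<sigma> ` B1) = card (g ` D \<inter> BB)" using card_mono[OF f1 s1] cB1 by simp
    then show ?thesis using card_subset_eq[OF f1 s1] by simp
  qed
  have QgD: "Q (g ` D)" unfolding Q_def using fD gDV dgD QD DB gDB cB1 unfolding Q_def by simp
  have PIR': "PI \<sigma> R'" unfolding PI_def
  proof (intro conjI allI impI)
    show "finite R'" unfolding R'_def using fD by simp
    show "Q (Domain R')" using DomR' QD by simp
    show "Q (Range R')" using RanR' QgD by simp
    fix x y x' y' assume p: "(x,y) \<in> R'" "(x',y') \<in> R'"
    then have xy: "x \<in> D" "y = g x" "x' \<in> D" "y' = g x'" unfolding R'_def by auto
    then have "x \<in> V" "x' \<in> V" using fD by auto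
    then show "x = x' \<longleftrightarrow> y = y'" "E x x' \<longleftrightarrow> E y y'" using xy ginj gE by (auto dest: inj_onD)
  next
    fix x y assume p: "(x,y) \<in> R'"
    then have xy: "x \<in> D" "y = g x" unfolding R'_def by auto
    show "x \<in> BB \<longleftrightarrow> y \<in> BB"
    proof
      assume "x \<in> BB"
      then have "x \<in> B1" using xy DB by blast
      then show "y \<in> BB" using xy gB1 sB1 by auto
    next
      assume "y \<in> BB"
      then have "y \<in> \<sigma> ` B1" using gDB xy by blast
      then obtain b where b: "b \<in> B1" "g x = g b" using gB1 xy by force
      then have "x = b" using ginj xy fD AD by (meson inj_onD subsetD)
      then show "x \<in> BB" using b fB1 by blast
    qed
  next
    fix x y assume p: "(x,y) \<in> R'" "x \<in> BB"
    then have xy: "x \<in> D" "y = g x" unfolding R'_def by auto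
    then have "x \<in> B1" using p DB by blast
    then show "y = \<sigma> x" using xy gB1 by simp
  qed
  have "x \<in> Domain R'" using DomR' Dx unfolding D_def by blast
  then show ?thesis using sub PIR' by blast
qed

end


context gen begin

lemma PI_empty: "PI \<sigma> {}" unfolding PI_def using Q_empty by simp

lemma part3:
  assumes sig: "bij_betw \<sigma> BB BB"
  shows "\<exists>g. automorphism V E g \<and> (\<forall>b\<in>BB. g b = \<sigma> b)"
proof -
  define \<tau> where "\<tau> = inv_into BB \<sigma>"
  have tau: "bij_betw \<tau> BB BB" unfolding \<tau>_def using sig by (rule bij_betw_inv_into)
  have ts: "\<forall>b\<in>BB. \<tau> (\<sigma> b) = b" unfolding \<tau>_def using sig by (simp add: bij_betw_def inv_into_f_f)
  have sti: "\<forall>b\<in>BB. \<sigma> (\<tau> b) = b" unfolding \<tau>_def using sig by (simp add: bij_betw_def f_inv_into_f)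
  have bck: "\<And>R x. PI \<sigma> R \<Longrightarrow> x \<in> V \<Longrightarrow> \<exists>R'. R \<subseteq> R' \<and> PI \<sigma> R' \<and> x \<in> Range R'"
  proof -
    fix R x assume R: "PI \<sigma> R" and x: "x \<in> V"
    have "PI \<tau> (R\<inverse>)" using PI_conv[OF R ts] .
    then obtain R'' where R'': "R\<inverse> \<subseteq> R''" "PI \<tau> R''" "x \<in> Domain R''" using forth[OF tau _ x] by blast
    have "PI \<sigma> (R''\<inverse>)" using PI_conv[OF R''(2) sti] .
    moreover have "R \<subseteq> R''\<inverse>" using R''(1) by auto
    moreover have "x \<in> Range (R''\<inverse>)" using R''(3) by simp
    ultimately show "\<exists>R'. R \<subseteq> R' \<and> PI \<sigma> R' \<and> x \<in> Range R'" by blast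
  qed
  have stp: "\<And>R x. PI \<sigma> R \<Longrightarrow> x \<in> V \<Longrightarrow> \<exists>R'. R \<subseteq> R' \<and> PI \<sigma> R' \<and> x \<in> Domain R' \<and> x \<in> Range R'"
  proof -
    fix R x assume R: "PI \<sigma> R" and x: "x \<in> V"
    obtain R1 where R1: "R \<subseteq> R1" "PI \<sigma> R1" "x \<in> Domain R1" using forth[OF sig R x] by blast
    obtain R2 where R2: "R1 \<subseteq> R2" "PI \<sigma> R2" "x \<in> Range R2" using bck[OF R1(2) x] by blast
    have "x \<in> Domain R2" using R1(3) R2(1) by blast
    then show "\<exists>R'. R \<subseteq> R' \<and> PI \<sigma> R' \<and> x \<in> Domain R' \<and> x \<in> Range R'" using R1 R2 by blast
  qed
  define nxt where "nxt = (\<lambda>R n. SOME R'. R \<subseteq> R' \<and> PI \<sigma> R' \<and> vv n \<in> Domain R' \<and> vv n \<in> Range R')"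
  define Rs where "Rs = rec_nat {} (\<lambda>n R. nxt R n)"
  have Rs0: "Rs 0 = {}" and RsS: "\<And>n. Rs (Suc n) = nxt (Rs n) n" unfolding Rs_def by simp_all
  have vvV: "\<And>n. vv n \<in> V" using vv_range by blast
  have PIRs: "\<And>n. PI \<sigma> (Rs n)"
  proof -
    fix n show "PI \<sigma> (Rs n)"
    proof (induction n)
      case 0 then show ?case using Rs0 PI_empty by simp
    next
      case (Suc n)
      have "\<exists>R'. Rs n \<subseteq> R' \<and> PI \<sigma> R' \<and> vv n \<in> Domain R' \<and> vv n \<in> Range R'" using stp[OF Suc vvV] .
      from someI_ex[OF this] show ?case unfolding RsS nxt_def by blast
    qed
  qed
  have RsStep: "\<And>n. Rs n \<subseteq> Rs (Suc n) \<and> vv n \<in> Domain (Rs (Suc n)) \<and> vv n \<in> Range (Rs (Suc n))"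
  proof -
    fix n
    have "\<exists>R'. Rs n \<subseteq> R' \<and> PI \<sigma> R' \<and> vv n \<in> Domain R' \<and> vv n \<in> Range R'" using stp[OF PIRs vvV] .
    from someI_ex[OF this] show "Rs n \<subseteq> Rs (Suc n) \<and> vv n \<in> Domain (Rs (Suc n)) \<and> vv n \<in> Range (Rs (Suc n))"
      unfolding RsS nxt_def by blast
  qed
  have mono: "\<And>n. Rs n \<subseteq> Rs (Suc n)" using RsStep by blast
  define Rw where "Rw = (\<Union>n. Rs n)"
  have two: "\<And>p p'. p \<in> Rw \<Longrightarrow> p' \<in> Rw \<Longrightarrow> \<exists>n. p \<in> Rs n \<and> p' \<in> Rs n"
  proof -
    fix p p' assume "p \<in> Rw" "p' \<in> Rw"
    then have "{p, p'} \<subseteq> (\<Union>n. Rs n)" unfolding Rw_def by blast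
    then obtain n where "{p,p'} \<subseteq> Rs n" using chain_fin[of Rs "{p,p'}"] mono by blast
    then show "\<exists>n. p \<in> Rs n \<and> p' \<in> Rs n" by blast
  qed
  have Rwfun: "\<And>x y x' y'. (x,y) \<in> Rw \<Longrightarrow> (x',y') \<in> Rw \<Longrightarrow> (x = x' \<longleftrightarrow> y = y') \<and> (E x x' \<longleftrightarrow> E y y')"
  proof -
    fix x y x' y' assume "(x,y) \<in> Rw" "(x',y') \<in> Rw"
    then obtain n where "(x,y) \<in> Rs n" "(x',y') \<in> Rs n" using two by blast
    then show "(x = x' \<longleftrightarrow> y = y') \<and> (E x x' \<longleftrightarrow> E y y')" using PIRs[of n] unfolding PI_def by blast
  qed
  have Rwsig: "\<And>x y. (x,y) \<in> Rw \<Longrightarrow> x \<in> BB \<Longrightarrow> y = \<sigma> x"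
  proof -
    fix x y assume "(x,y) \<in> Rw" "x \<in> BB"
    then obtain n where "(x,y) \<in> Rs n" unfolding Rw_def by blast
    then show "y = \<sigma> x" using PIRs[of n] \<open>x \<in> BB\<close> unfolding PI_def by blast
  qed
  have RwV: "\<And>x y. (x,y) \<in> Rw \<Longrightarrow> x \<in> V \<and> y \<in> V"
  proof -
    fix x y assume "(x,y) \<in> Rw"
    then obtain n where n: "(x,y) \<in> Rs n" unfolding Rw_def by blast
    have "Q (Domain (Rs n))" "Q (Range (Rs n))" using PIRs[of n] unfolding PI_def by blast+
    then have "Domain (Rs n) \<subseteq> V" "Range (Rs n) \<subseteq> V" unfolding Q_def by blast+
    then show "x \<in> V \<and> y \<in> V" using n by blast
  qed
  have dom: "\<And>x. x \<in> V \<Longrightarrow> \<exists>y. (x,y) \<in> Rw"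
  proof -
    fix x assume "x \<in> V"
    then obtain n where "x = vv n" using vv_range by blast
    then have "x \<in> Domain (Rs (Suc n))" using RsStep by blast
    then show "\<exists>y. (x,y) \<in> Rw" unfolding Rw_def by blast
  qed
  have ran: "\<And>y. y \<in> V \<Longrightarrow> \<exists>x. (x,y) \<in> Rw"
  proof -
    fix y assume "y \<in> V"
    then obtain n where "y = vv n" using vv_range by blast
    then have "y \<in> Range (Rs (Suc n))" using RsStep by blast
    then show "\<exists>x. (x,y) \<in> Rw" unfolding Rw_def by blast
  qed
  define g where "g = (\<lambda>x. THE y. (x,y) \<in> Rw)"
  have gR: "\<And>x y. (x,y) \<in> Rw \<Longrightarrow> g x = y"
    unfolding g_def using Rwfun by (intro the_equality) blast+
  have gxR: "\<And>x. x \<in> V \<Longrightarrow> (x, g x) \<in> Rw" using dom gR by blast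
  have aut: "automorphism V E g" unfolding automorphism_def bij_betw_def
  proof (intro conjI ballI)
    show "inj_on g V"
    proof
      fix x x' assume "x \<in> V" "x' \<in> V" "g x = g x'"
      then show "x = x'" using gxR[of x] gxR[of x'] Rwfun by metis
    qed
    show "g ` V = V"
    proof
      show "g ` V \<subseteq> V" using gxR RwV by blast
      show "V \<subseteq> g ` V"
      proof
        fix y assume "y \<in> V"
        then obtain x where x: "(x,y) \<in> Rw" using ran by blast
        then have "x \<in> V" "g x = y" using RwV gR by auto
        then show "y \<in> g ` V" by blast
      qed
    qed
    fix x y assume "x \<in> V" "y \<in> V"
    then show "E (g x) (g y) \<longleftrightarrow> E x y" using gxR Rwfun by metis
  qed
  moreover have "\<forall>b\<in>BB. g b = \<sigma> b" using gxR Rwsig BB_V by blast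
  ultimately show ?thesis by blast
qed

end

theorem lemma8:
  fixes m :: nat and V :: "'a set" and E :: "'a \<Rightarrow> 'a \<Rightarrow> bool"
  assumes "m \<ge> 2" and "generic m V E"
  shows "\<exists>B \<subseteq> V. countable B \<and> gcl m V E B = V \<and>
           (\<forall>B0. B0 \<subseteq> B \<and> finite B0 \<longrightarrow> strong m E B0 V) \<and>
           (\<forall>\<sigma>. bij_betw \<sigma> B B \<longrightarrow> (\<exists>g. automorphism V E g \<and> (\<forall>b\<in>B. g b = \<sigma> b)))"
proof -
  interpret gen m V E using assms by unfold_locales
  show ?thesis
    using BB_V BB_count part1 part2 part3 by blast
qed


end
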